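(* Let $p\ge 7$ be a prime. Then $$\sum_{k=1}^{p-1}\frac{H_k H_{k,2}}{k}\equiv -\frac{3}{2}\sum_{k=1}^{p-1}\frac{H_k^2}{k^2}\pmod{p}.$$
   Context: For positive integers $n,m$, $H_{n,m}=\sum_{k=1}^n 1/k^m$ and $H_n=H_{n,1}$. Congruences modulo $p$ are taken in the ring of rationals with denominators not divisible by $p$. *)

theory Defs
  imports "HOL-Number_Theory.Number_Theory"
begin

definition harm :: "nat \<Rightarrow> nat \<Rightarrow> rat" where
  "harm n m = (\<Sum>k=1..n. 1 / (of_nat k) ^ m)"

text \<open>Congruence modulo p in the ring of rationals whose denominators are not
divisible by p: x is congruent to y iff x - y = a/b with integers a, b,
p not dividing b, and p dividing a.\<close>
definition rat_cong :: "rat \<Rightarrow> rat \<Rightarrow> int \<Rightarrow> bool" where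
  "rat_cong x y p \<longleftrightarrow> (\<exists>a b. b \<noteq> 0 \<and> \<not> p dvd b \<and> p dvd a \<and> x - y = of_int a / of_int b)"

end

theory Submission
  imports Defs
begin

definition pint :: "nat \<Rightarrow> rat \<Rightarrow> bool" where
  "pint p x \<longleftrightarrow> (\<exists>a b. b \<noteq> 0 \<and> \<not> int p dvd b \<and> x = of_int a / of_int b)"

definition pz :: "nat \<Rightarrow> rat \<Rightarrow> bool" where
  "pz p x \<longleftrightarrow> (\<exists>a b. b \<noteq> 0 \<and> \<not> int p dvd b \<and> int p dvd a \<and> x = of_int a / of_int b)"

lemma pz_rat_cong: "rat_cong x y (int p) \<longleftrightarrow> pz p (x - y)"
  unfolding rat_cong_def pz_def by simp

context
  fixes p :: nat
  assumes pr: "prime p"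
begin

lemma prime_int_p: "prime (int p)" using pr by simp

lemma ndvd_mult: "\<not> int p dvd b \<Longrightarrow> \<not> int p dvd d \<Longrightarrow> \<not> int p dvd (b * d)"
  using prime_int_p prime_dvd_mult_iff by blast

lemma pint_of_int[simp]: "pint p (of_int a)"
  unfolding pint_def using pr
  by (rule_tac x=a in exI, rule_tac x=1 in exI) (auto simp: prime_gt_1_nat)

lemma pint_of_nat[simp]: "pint p (of_nat a)"
  using pint_of_int[of "int a"] by simp

lemma pint_0[simp]: "pint p 0" using pint_of_int[of 0] by simp
lemma pint_1[simp]: "pint p 1" using pint_of_int[of 1] by simp
lemma pint_numeral[simp]: "pint p (numeral n)" using pint_of_int[of "numeral n"] by simp

lemma pint_add[intro]: assumes "pint p x" "pint p y" shows "pint p (x + y)"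
proof -
  obtain a b c d where "b \<noteq> 0" "\<not> int p dvd b" "x = of_int a / of_int b"
    "d \<noteq> 0" "\<not> int p dvd d" "y = of_int c / of_int d"
    using assms unfolding pint_def by blast
  then show ?thesis unfolding pint_def
    by (rule_tac x="a*d + c*b" in exI, rule_tac x="b*d" in exI)
       (auto simp: ndvd_mult field_simps)
qed

lemma pint_mult[intro]: assumes "pint p x" "pint p y" shows "pint p (x * y)"
proof -
  obtain a b c d where "b \<noteq> 0" "\<not> int p dvd b" "x = of_int a / of_int b"
    "d \<noteq> 0" "\<not> int p dvd d" "y = of_int c / of_int d"
    using assms unfolding pint_def by blast
  then show ?thesis unfolding pint_def
    by (rule_tac x="a*c" in exI, rule_tac x="b*d" in exI)
       (auto simp: ndvd_mult field_simps)
qed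

lemma pint_uminus[intro]: assumes "pint p x" shows "pint p (- x)"
  using pint_mult[OF pint_of_int[of "-1"] assms] by simp

lemma pint_diff[intro]: assumes "pint p x" "pint p y" shows "pint p (x - y)"
  using pint_add[OF assms(1) pint_uminus[OF assms(2)]] by simp

lemma pint_inv_int: assumes "\<not> int p dvd c" shows "pint p (1 / of_int c)"
  unfolding pint_def using assms
  by (rule_tac x=1 in exI, rule_tac x=c in exI) auto

lemma pint_power[intro]: "pint p x \<Longrightarrow> pint p (x ^ n)"
  by (induction n) auto

lemma pint_sum[intro]: "(\<And>i. i \<in> A \<Longrightarrow> pint p (f i)) \<Longrightarrow> pint p (\<Sum>i\<in>A. f i)"
  by (induction A rule: infinite_finite_induct) auto

lemma pint_divide_int: assumes "pint p x" "\<not> int p dvd c" shows "pint p (x / of_int c)"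
  using pint_mult[OF assms(1) pint_inv_int[OF assms(2)]] by simp

lemma pint_inv_nat: assumes "1 \<le> k" "k < p" shows "pint p (1 / of_nat k)"
proof -
  have "\<not> int p dvd int k" using assms by (auto dest: zdvd_imp_le)
  then show ?thesis using pint_inv_int[of "int k"] by simp
qed

lemma pint_divide_nat: assumes "pint p x" "1 \<le> k" "k < p" shows "pint p (x / of_nat k)"
  using pint_mult[OF assms(1) pint_inv_nat[OF assms(2,3)]] by simp

lemma pz_imp_pint: "pz p x \<Longrightarrow> pint p x"
  unfolding pz_def pint_def by blast

lemma pz_0[simp]: "pz p 0"
  unfolding pz_def using pr
  by (rule_tac x=0 in exI, rule_tac x=1 in exI) (auto simp: prime_gt_1_nat)

lemma pz_of_int: "int p dvd a \<Longrightarrow> pz p (of_int a)"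
  unfolding pz_def using pr
  by (rule_tac x=a in exI, rule_tac x=1 in exI) (auto simp: prime_gt_1_nat)

lemma pz_add[intro]: assumes "pz p x" "pz p y" shows "pz p (x + y)"
proof -
  obtain a b c d where "b \<noteq> 0" "\<not> int p dvd b" "x = of_int a / of_int b" "int p dvd a"
    "d \<noteq> 0" "\<not> int p dvd d" "y = of_int c / of_int d" "int p dvd c"
    using assms unfolding pz_def by blast
  then show ?thesis unfolding pz_def
    by (rule_tac x="a*d + c*b" in exI, rule_tac x="b*d" in exI)
       (auto simp: ndvd_mult field_simps)
qed

lemma pz_mult[intro]: assumes "pint p x" "pz p y" shows "pz p (x * y)"
proof -
  obtain a b c d where "b \<noteq> 0" "\<not> int p dvd b" "x = of_int a / of_int b"
    "d \<noteq> 0" "\<not> int p dvd d" "y = of_int c / of_int d" "int p dvd c"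
    using assms unfolding pint_def pz_def by blast
  then show ?thesis unfolding pz_def
    by (rule_tac x="a*c" in exI, rule_tac x="b*d" in exI)
       (auto simp: ndvd_mult field_simps)
qed

lemma pz_mult2[intro]: assumes "pz p y" "pint p x" shows "pz p (y * x)"
  using pz_mult[OF assms(2,1)] by (simp add: mult.commute)

lemma pz_uminus[intro]: "pz p x \<Longrightarrow> pz p (- x)"
  using pz_mult[OF pint_of_int[of "-1"]] by fastforce

lemma pz_uminus_iff[simp]: "pz p (- x) \<longleftrightarrow> pz p x"
  using pz_uminus[of "-x"] pz_uminus[of x] by auto

lemma pz_diff[intro]: "pz p x \<Longrightarrow> pz p y \<Longrightarrow> pz p (x - y)"
  using pz_add[of x "-y"] by auto

lemma pz_sum[intro]: "(\<And>i. i \<in> A \<Longrightarrow> pz p (f i)) \<Longrightarrow> pz p (\<Sum>i\<in>A. f i)"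
  by (induction A rule: infinite_finite_induct) auto

lemma pz_cancel: assumes "pz p (of_int c * x)" "\<not> int p dvd c" shows "pz p x"
proof -
  have "c \<noteq> 0" using assms(2) by auto
  have "x = (1 / of_int c) * (of_int c * x)" using \<open>c \<noteq> 0\<close> by simp
  then show ?thesis using pz_mult[OF pint_inv_int[OF assms(2)] assms(1)] by simp
qed

lemma pz_cancel2: assumes "pz p (2 * x)" "p \<noteq> 2" shows "pz p x"
proof -
  have "\<not> int p dvd 2"
  proof
    assume "int p dvd 2" then have "p dvd 2" by presburger
    then have "p \<le> 2" by (auto dest: dvd_imp_le)
    then show False using assms(2) pr prime_ge_2_nat[OF pr] by auto
  qed
  then show ?thesis using pz_cancel[of 2 x] assms(1) by simp
qed

lemma pz_inv_cong: assumes "\<not> int p dvd a" "\<not> int p dvd b" "[a = b] (mod int p)"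
  shows "pz p (1 / of_int a - 1 / of_int b)"
proof -
  have "a \<noteq> 0" "b \<noteq> 0" using assms by auto
  have "int p dvd (b - a)" using assms(3) by (simp add: cong_iff_dvd_diff dvd_diff_commute)
  then show ?thesis unfolding pz_def using assms \<open>a\<noteq>0\<close> \<open>b\<noteq>0\<close>
    by (rule_tac x="b - a" in exI, rule_tac x="a*b" in exI)
       (auto simp: ndvd_mult field_simps)
qed

end


context
  fixes p :: nat
  assumes pr: "prime p"
begin

lemma harm_pz_gen:
  assumes c: "\<not> p dvd c" and cm: "\<not> int p dvd (int c ^ m - 1)"
  shows "pz p (harm (p-1) m)"
proof -
  define A where "A = {1..p-1}"
  define s where "s k = (c * k) mod p" for k
  have p1: "p > 1" using prime_gt_1_nat[OF pr] .
  have ndk: "\<not> p dvd c * k" if "k \<in> A" for k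
  proof
    assume "p dvd c * k"
    then have "p dvd k" using c pr prime_dvd_mult_iff by blast
    then show False using that unfolding A_def by (auto dest: dvd_imp_le)
  qed
  have inj: "inj_on s A"
  proof (rule inj_onI)
    fix x y assume xy: "x \<in> A" "y \<in> A" "s x = s y"
    then have "[c * x = c * y] (mod p)" unfolding s_def cong_def by simp
    moreover have "coprime c p" using c pr
      by (metis coprime_commute prime_imp_coprime)
    ultimately have "[x = y] (mod p)" using cong_mult_lcancel_nat by blast
    moreover have "x < p" "y < p" using xy(1,2) p1 unfolding A_def by auto
    ultimately show "x = y" unfolding cong_def by simp
  qed
  have sub: "s ` A \<subseteq> A"
  proof
    fix y assume "y \<in> s ` A"
    then obtain k where k: "k \<in> A" "y = s k" by auto
    have "y < p" using k p1 unfolding s_def by simp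
    moreover have "y \<noteq> 0" using ndk[OF k(1)] k(2) unfolding s_def by (simp add: dvd_eq_mod_eq_0)
    ultimately show "y \<in> A" unfolding A_def by auto
  qed
  have img: "s ` A = A" using endo_inj_surj[OF _ sub inj] unfolding A_def by simp
  have H: "harm (p-1) m = (\<Sum>k\<in>A. 1 / (of_nat k) ^ m)" unfolding harm_def A_def by simp
  also have "\<dots> = (\<Sum>k\<in>s ` A. 1 / (of_nat k) ^ m)" using img by simp
  also have "\<dots> = (\<Sum>k\<in>A. 1 / (of_nat (s k)) ^ m)" using sum.reindex[OF inj] by simp
  finally have H2: "harm (p-1) m = (\<Sum>k\<in>A. 1 / (of_nat (s k)) ^ m)" .
  have "pz p (\<Sum>k\<in>A. 1 / (of_nat (s k)) ^ m - 1 / (of_nat (c * k)) ^ m)"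
  proof (rule pz_sum[OF pr])
    fix k assume k: "k \<in> A"
    have nd1: "\<not> int p dvd int (s k) ^ m"
    proof
      assume "int p dvd int (s k) ^ m"
      then have "int p dvd int (s k)" using prime_dvd_power prime_int_p[OF pr] by blast
      then have "p dvd s k" by presburger
      then have "p dvd c * k" unfolding s_def by (simp add: dvd_eq_mod_eq_0)
      then show False using ndk[OF k] by simp
    qed
    have nd2: "\<not> int p dvd int (c * k) ^ m"
    proof
      assume "int p dvd int (c * k) ^ m"
      then have "int p dvd int (c * k)" using prime_dvd_power prime_int_p[OF pr] by blast
      then have "p dvd c * k" by presburger
      then show False using ndk[OF k] by simp
    qed
    have "[s k = c * k] (mod p)" unfolding s_def cong_def by simp
    then have "[int (s k) = int (c * k)] (mod int p)" using cong_int_iff by blast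
    then have "[int (s k) ^ m = int (c * k) ^ m] (mod int p)" by (rule cong_pow)
    from pz_inv_cong[OF pr nd1 nd2 this]
    show "pz p (1 / (of_nat (s k)) ^ m - 1 / (of_nat (c * k)) ^ m)" by simp
  qed
  also have "(\<Sum>k\<in>A. 1 / (of_nat (s k)) ^ m - 1 / (of_nat (c * k)) ^ m)
     = harm (p-1) m - harm (p-1) m / (of_nat c) ^ m"
  proof -
    have "(\<Sum>k\<in>A. 1 / (of_nat (c * k) :: rat) ^ m) = (\<Sum>k\<in>A. 1 / (of_nat k) ^ m) / (of_nat c) ^ m"
      by (simp add: sum_divide_distrib power_mult_distrib mult.commute)
    then show ?thesis unfolding sum_subtractf using H H2 by simp
  qed
  finally have "pz p (harm (p-1) m - harm (p-1) m / (of_nat c) ^ m)" .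
  then have "pz p (of_nat c ^ m * (harm (p-1) m - harm (p-1) m / (of_nat c) ^ m))"
    by (rule pz_mult[OF pr pint_power[OF pr pint_of_nat[OF pr]]])
  moreover have "c \<noteq> 0" using c by (metis dvd_0_right)
  moreover have "of_nat c ^ m * (harm (p-1) m - harm (p-1) m / (of_nat c) ^ m)
      = of_int (int c ^ m - 1) * harm (p-1) m" if "c \<noteq> 0"
    using that by (simp add: field_simps)
  ultimately have "pz p (of_int (int c ^ m - 1) * harm (p-1) m)"
    by simp
  then show ?thesis using pz_cancel[OF pr _ cm] by blast
qed

lemma harm_pz:
  assumes p7: "p \<ge> 7" and m: "m \<in> {1,2,3,4}"
  shows "pz p (harm (p-1) m)"
proof -
  have npd: "\<not> int p dvd d" if "d \<noteq> 0" "\<bar>d\<bar> < 7" for d :: int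
  proof
    assume "int p dvd d"
    from dvd_imp_le_int[OF that(1) this] have "int p \<le> \<bar>d\<bar>" by simp
    then show False using p7 that(2) by simp
  qed
  have odd: "pz p (harm (p-1) m)" if "odd m"
  proof (rule harm_pz_gen)
    show "\<not> p dvd (p - 1)"
    proof
      assume "p dvd p - 1"
      moreover have "p - 1 > 0" using p7 by simp
      ultimately have "p \<le> p - 1" by (rule dvd_imp_le)
      then show False using p7 by simp
    qed
    have "int (p-1) = int p - 1" using p7 by simp
    then have "[int (p-1) = -1] (mod int p)" by (simp add: cong_iff_dvd_diff)
    then have c1: "[int (p-1) ^ m = (-1) ^ m] (mod int p)" by (rule cong_pow)
    have "(-1::int) ^ m = -1" using that by simp
    then have "[int (p-1) ^ m = -1] (mod int p)" using c1 by simp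
    from cong_diff[OF this cong_refl[of 1]]
    have c2: "[int (p-1) ^ m - 1 = -2] (mod int p)" by simp
    show "\<not> int p dvd (int (p-1) ^ m - 1)"
    proof
      assume "int p dvd (int (p-1) ^ m - 1)"
      then have "int p dvd -2" using cong_dvd_iff[OF c2] by simp
      then show False using npd[of "-2"] by simp
    qed
  qed
  have even: "pz p (harm (p-1) m)" if "m = 2 \<or> m = 4"
  proof (rule harm_pz_gen[where c=2])
    show "\<not> p dvd 2"
    proof
      assume "p dvd 2"
      then have "p \<le> 2" by (rule dvd_imp_le) simp
      then show False using p7 by simp
    qed
    show "\<not> int p dvd (int 2 ^ m - 1)"
    proof
      assume h: "int p dvd (int 2 ^ m - 1)"
      show False
      proof (cases "m = 2")
        case True then show ?thesis using h npd[of 3] by simp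
      next
        case False then have "m = 4" using that by simp
        then have "int p dvd 3 * 5" using h by simp
        then have "int p dvd 3 \<or> int p dvd 5" using prime_int_p[OF pr] prime_dvd_mult_iff by blast
        then show ?thesis using npd[of 3] npd[of 5] by simp
      qed
    qed
  qed
  show ?thesis using m odd even by auto
qed

end


definition Bt :: "nat \<Rightarrow> (nat \<Rightarrow> rat) \<Rightarrow> rat" where
  "Bt n f = (\<Sum>j<n. (-1)^j * of_nat (n choose Suc j) * f (Suc j))"

lemma sum_1n: "(\<Sum>k=1..n. g k) = (\<Sum>k<n. g (Suc k))"
  using sum.atLeast1_atMost_eq[of g n] by simp

lemma Bt_Suc: "Bt (Suc n) f = Bt n f + (\<Sum>j<Suc n. (-1)^j * of_nat (n choose j) * f (Suc j))"
proof -
  have "Bt (Suc n) f = (\<Sum>j<Suc n. (-1)^j * of_nat (n choose j) * f (Suc j))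
      + (\<Sum>j<Suc n. (-1)^j * of_nat (n choose Suc j) * f (Suc j))"
    unfolding Bt_def by (simp add: algebra_simps sum.distrib)
  also have "(\<Sum>j<Suc n. (-1)^j * of_nat (n choose Suc j) * f (Suc j) :: rat) = Bt n f"
    unfolding Bt_def by simp
  finally show ?thesis by simp
qed

lemma R1: "Bt n (\<lambda>i. f i / of_nat i) = (\<Sum>k=1..n. Bt k f / of_nat k)"
proof (induction n)
  case 0 then show ?case by (simp add: Bt_def)
next
  case (Suc n)
  have "(\<Sum>j<Suc n. (-1)^j * of_nat (n choose j) * (f (Suc j) / of_nat (Suc j)))
      = (\<Sum>j<Suc n. (-1)^j * of_nat (Suc n choose Suc j) * f (Suc j)) / of_nat (Suc n)"
    unfolding sum_divide_distrib
  proof (rule sum.cong[OF refl])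
    fix j
    have e: "of_nat (Suc n) * of_nat (n choose j) = (of_nat (Suc n choose Suc j) * of_nat (Suc j) :: rat)"
      using Suc_times_binomial_eq[of n j] by (metis of_nat_mult)
    show "(-1)^j * of_nat (n choose j) * (f (Suc j) / of_nat (Suc j))
        = (-1)^j * of_nat (Suc n choose Suc j) * f (Suc j) / of_nat (Suc n)"
      using e by (simp add: field_simps del: of_nat_Suc binomial_Suc_Suc)
  qed
  then have "Bt (Suc n) (\<lambda>i. f i / of_nat i) = Bt n (\<lambda>i. f i / of_nat i) + Bt (Suc n) f / of_nat (Suc n)"
    unfolding Bt_Suc[of n "\<lambda>i. f i / of_nat i"] Bt_def[of "Suc n" f] by simp
  then show ?case using Suc.IH by simp
qed

lemma alt_partial: "(\<Sum>j<l. (-1)^j * of_nat (Suc m choose Suc j) :: rat) = 1 - (-1)^l * of_nat (m choose l)"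
proof (induction l)
  case 0 then show ?case by simp
next
  case (Suc l) then show ?case by (simp add: algebra_simps)
qed

lemma Bt_one: "n \<ge> 1 \<Longrightarrow> Bt n (\<lambda>_. 1) = 1"
proof -
  assume "n \<ge> 1"
  then obtain m where m: "n = Suc m" by (cases n) auto
  show ?thesis unfolding Bt_def m using alt_partial[where l="Suc m" and m=m] by (simp del: binomial_Suc_Suc)
qed

lemma swap_sum: fixes n :: nat and c h :: "nat \<Rightarrow> rat" shows "(\<Sum>j<n. c j * (\<Sum>l\<le>j. h l)) = (\<Sum>l<n. h l * (\<Sum>j\<in>{l..<n}. c j))"
proof (induction n)
  case 0 then show ?case by simp
next
  case (Suc n)
  have a: "(\<Sum>l<Suc n. h l * sum c {l..<Suc n}) = (\<Sum>l<n. h l * sum c {l..<Suc n}) + h n * c n"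
    by simp
  have b: "(\<Sum>l<n. h l * sum c {l..<Suc n}) = (\<Sum>l<n. h l * sum c {l..<n} + h l * c n)"
    by (rule sum.cong) (auto simp: sum.atLeastLessThan_Suc distrib_left)
  have c: "(\<Sum>l<n. h l * sum c {l..<n} + h l * c n) = (\<Sum>j<n. c j * (\<Sum>l\<le>j. h l)) + c n * (\<Sum>l<n. h l)"
    using Suc.IH by (simp add: sum.distrib sum_distrib_left sum_distrib_right mult.commute)
  have d: "(\<Sum>l\<le>n. h l) = (\<Sum>l<n. h l) + h n" by (simp add: lessThan_Suc_atMost[symmetric])
  show ?case unfolding a b c using d by (simp add: algebra_simps)
qed

lemma R2: "Bt n (\<lambda>i. \<Sum>j=1..i. g j / of_nat j) = Bt n g / of_nat n"
proof (cases n)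
  case 0 then show ?thesis by (simp add: Bt_def)
next
  case (Suc m)
  define c where "c j = ((-1)^j * of_nat (Suc m choose Suc j) :: rat)" for j
  define h where "h l = g (Suc l) / of_nat (Suc l)" for l
  have inner: "(\<Sum>j=1..Suc i. g j / of_nat j) = (\<Sum>l\<le>i. h l)" for i
    unfolding sum_1n h_def by (simp add: lessThan_Suc_atMost)
  have "Bt (Suc m) (\<lambda>i. \<Sum>j=1..i. g j / of_nat j) = (\<Sum>j<Suc m. c j * (\<Sum>l\<le>j. h l))"
    unfolding Bt_def c_def inner by simp
  also have "\<dots> = (\<Sum>l<Suc m. h l * (\<Sum>j\<in>{l..<Suc m}. c j))" by (rule swap_sum)
  also have "\<dots> = (\<Sum>l<Suc m. h l * ((-1)^l * of_nat (m choose l)))"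
  proof (rule sum.cong[OF refl])
    fix l assume "l \<in> {..<Suc m}"
    then have "{..<Suc m} = {..<l} \<union> {l..<Suc m}" "{..<l} \<inter> {l..<Suc m} = {}" by auto
    then have "(\<Sum>j<Suc m. c j) = (\<Sum>j<l. c j) + (\<Sum>j\<in>{l..<Suc m}. c j)"
      by (metis finite_lessThan finite_atLeastLessThan sum.union_disjoint)
    moreover have "(\<Sum>j<Suc m. c j) = 1"
      using alt_partial[where l="Suc m" and m=m] by (simp add: c_def del: binomial_Suc_Suc sum.lessThan_Suc)
    moreover have "(\<Sum>j<l. c j) = 1 - (-1)^l * of_nat (m choose l)"
      using alt_partial[where l=l and m=m] by (simp add: c_def del: binomial_Suc_Suc)
    ultimately have "(\<Sum>j\<in>{l..<Suc m}. c j) = (-1)^l * of_nat (m choose l)"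
      by linarith
    then show "h l * (\<Sum>j\<in>{l..<Suc m}. c j) = h l * ((-1)^l * of_nat (m choose l))" by simp
  qed
  also have "\<dots> = Bt (Suc m) g / of_nat (Suc m)"
    unfolding Bt_def sum_divide_distrib h_def
  proof (rule sum.cong[OF refl])
    fix j
    have e: "of_nat (Suc m) * of_nat (m choose j) = (of_nat (Suc m choose Suc j) * of_nat (Suc j) :: rat)"
      using Suc_times_binomial_eq[of m j] by (metis of_nat_mult)
    show "g (Suc j) / of_nat (Suc j) * ((-1)^j * of_nat (m choose j))
        = (-1)^j * of_nat (Suc m choose Suc j) * g (Suc j) / of_nat (Suc m)"
      using e by (simp add: field_simps del: of_nat_Suc binomial_Suc_Suc)
  qed
  finally show ?thesis using Suc by simp
qed



definition S11 :: "nat \<Rightarrow> rat" where "S11 i = (\<Sum>j=1..i. harm j 1 / of_nat j)"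
definition AA :: "nat \<Rightarrow> rat" where "AA n = (\<Sum>k=1..n. harm k 1 * harm k 2 / of_nat k)"
definition BB :: "nat \<Rightarrow> rat" where "BB n = (\<Sum>k=1..n. (harm k 1)^2 / (of_nat k)^2)"
definition XX :: "nat \<Rightarrow> rat" where "XX n = (\<Sum>k=1..n. harm k 3 / of_nat k)"
definition YY :: "nat \<Rightarrow> rat" where "YY n = (\<Sum>k=1..n. harm k 1 / (of_nat k)^3)"
definition ZZ :: "nat \<Rightarrow> rat" where "ZZ n = (\<Sum>k=1..n. harm k 2 / (of_nat k)^2)"
definition WW :: "nat \<Rightarrow> rat" where "WW n = (\<Sum>k=1..n. S11 k / (of_nat k)^2)"

lemma harm_0[simp]: "harm 0 m = 0" by (simp add: harm_def)
lemma harm_Suc: "harm (Suc n) m = harm n m + (1 / of_nat (Suc n))^m"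
  by (simp add: harm_def power_one_over)
lemma S11_Suc: "S11 (Suc n) = S11 n + harm (Suc n) 1 * (1 / of_nat (Suc n))"
  by (simp add: S11_def)

lemma divpow: "a / (of_nat (Suc n) :: rat) ^ k = a * (1 / of_nat (Suc n))^k"
  by (simp add: power_one_over)
lemma div1: "a / (of_nat (Suc n) :: rat) = a * (1 / of_nat (Suc n))"
  by simp

lemma E_XY: "XX n + YY n = harm n 1 * harm n 3 + harm n 4"
proof (induction n)
  case 0 then show ?case by (simp add: XX_def YY_def)
next
  case (Suc n)
  define x where "x = 1 / (of_nat (Suc n) :: rat)"
  have "XX (Suc n) = XX n + (harm n 3 + x^3) * x" unfolding XX_def by (simp add: harm_Suc x_def)
  moreover have "YY (Suc n) = YY n + (harm n 1 + x) * x^3" unfolding YY_def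
    by (simp add: harm_Suc x_def power_one_over)
  ultimately show ?case using Suc.IH unfolding harm_Suc[of n] x_def[symmetric]
    by (simp add: algebra_simps power2_eq_square power3_eq_cube numeral_eq_Suc)
qed

lemma E_Z: "2 * ZZ n = (harm n 2)^2 + harm n 4"
proof (induction n)
  case 0 then show ?case by (simp add: ZZ_def)
next
  case (Suc n)
  define x where "x = 1 / (of_nat (Suc n) :: rat)"
  have "ZZ (Suc n) = ZZ n + (harm n 2 + x^2) * x^2" unfolding ZZ_def
    by (simp add: harm_Suc x_def power_one_over)
  then show ?case using Suc.IH unfolding harm_Suc[of n] x_def[symmetric]
    by (simp add: algebra_simps power2_eq_square numeral_eq_Suc)
qed

lemma E_sq: "(harm n 1)^2 = 2 * S11 n - harm n 2"
proof (induction n)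
  case 0 then show ?case by (simp add: S11_def)
next
  case (Suc n)
  define x where "x = 1 / (of_nat (Suc n) :: rat)"
  show ?case using Suc.IH unfolding S11_Suc harm_Suc[of n] x_def[symmetric]
    by (simp add: algebra_simps power2_eq_square)
qed

lemma E_B: "BB n = 2 * WW n - ZZ n"
proof -
  have "BB n = (\<Sum>k=1..n. (2 * S11 k - harm k 2) / (of_nat k)^2)"
    unfolding BB_def E_sq ..
  also have "\<dots> = 2 * WW n - ZZ n"
    unfolding WW_def ZZ_def by (simp add: diff_divide_distrib sum_subtractf sum_distrib_left)
  finally show ?thesis .
qed

lemma E_AB: "2 * AA n + BB n = (harm n 1)^2 * harm n 2 + 2 * YY n + ZZ n - harm n 4"
proof (induction n)
  case 0 then show ?case by (simp add: AA_def BB_def YY_def ZZ_def)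
next
  case (Suc n)
  define x where "x = 1 / (of_nat (Suc n) :: rat)"
  have "AA (Suc n) = AA n + (harm n 1 + x) * (harm n 2 + x^2) * x" unfolding AA_def
    by (simp add: harm_Suc x_def)
  moreover have "BB (Suc n) = BB n + (harm n 1 + x)^2 * x^2" unfolding BB_def
    by (simp add: harm_Suc x_def power_one_over)
  moreover have "YY (Suc n) = YY n + (harm n 1 + x) * x^3" unfolding YY_def
    by (simp add: harm_Suc x_def power_one_over)
  moreover have "ZZ (Suc n) = ZZ n + (harm n 2 + x^2) * x^2" unfolding ZZ_def
    by (simp add: harm_Suc x_def power_one_over)
  ultimately show ?case using Suc.IH unfolding harm_Suc[of n] x_def[symmetric]
    by (simp add: algebra_simps power2_eq_square power3_eq_cube numeral_eq_Suc)
qed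

lemma E_dual: "Bt n (\<lambda>i. S11 i / (of_nat i)^2) = XX n"
proof -
  have h1: "Bt l (\<lambda>i. harm i 1) = 1 / of_nat l" for l
  proof (cases "l = 0")
    case True then show ?thesis by (simp add: Bt_def)
  next
    case False
    have "Bt l (\<lambda>i. harm i 1) = Bt l (\<lambda>i. \<Sum>j=1..i. 1 / of_nat j)" by (simp add: harm_def)
    also have "\<dots> = Bt l (\<lambda>_. 1) / of_nat l" using R2[of l "\<lambda>_. 1"] by simp
    finally show ?thesis using Bt_one[of l] False by simp
  qed
  have s11: "Bt l S11 = 1 / (of_nat l)^2" for l
  proof -
    have "Bt l S11 = Bt l (\<lambda>i. harm i 1) / of_nat l" unfolding S11_def by (rule R2)
    then show ?thesis using h1[of l] by (simp add: power2_eq_square)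
  qed
  have "Bt n (\<lambda>i. S11 i / (of_nat i)^2) = Bt n (\<lambda>i. (S11 i / of_nat i) / of_nat i)"
    by (simp add: power2_eq_square)
  also have "\<dots> = (\<Sum>k=1..n. Bt k (\<lambda>i. S11 i / of_nat i) / of_nat k)" by (rule R1)
  also have "\<dots> = (\<Sum>k=1..n. (\<Sum>l=1..k. Bt l S11 / of_nat l) / of_nat k)" by (simp add: R1)
  also have "\<dots> = (\<Sum>k=1..n. harm k 3 / of_nat k)"
    by (simp add: s11 harm_def power2_eq_square power3_eq_cube)
  finally show ?thesis unfolding XX_def .
qed



context
  fixes p :: nat
  assumes pr: "prime p"
begin

lemma p_gt1: "p > 1" using prime_gt_1_nat[OF pr] .

lemma binom_cong: "i \<le> p - 1 \<Longrightarrow> [(-1)^i * int (p - 1 choose i) = 1] (mod int p)"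
proof (induction i)
  case 0 then show ?case by simp
next
  case (Suc i)
  have pe: "p = Suc (p - 1)" using p_gt1 by simp
  have "p choose Suc i = (p - 1 choose i) + (p - 1 choose Suc i)"
    by (subst pe) (simp only: binomial_Suc_Suc)
  moreover have "p dvd (p choose Suc i)"
    using dvd_choose_prime[of "Suc i" p] Suc.prems pr p_gt1 by simp
  ultimately have "int p dvd int (p - 1 choose Suc i) - (- int (p - 1 choose i))"
    by (metis add.commute diff_minus_eq_add int_dvd_int_iff of_nat_add)
  then have c1: "[int (p - 1 choose Suc i) = - int (p - 1 choose i)] (mod int p)"
    by (simp add: cong_iff_dvd_diff)
  have "[(-1)^Suc i * int (p - 1 choose Suc i) = (-1)^Suc i * (- int (p - 1 choose i))] (mod int p)"
    by (rule cong_mult[OF cong_refl c1])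
  moreover have "(-1)^Suc i * (- int (p - 1 choose i)) = (-1)^i * int (p - 1 choose i)" by simp
  ultimately show ?case using Suc.IH Suc.prems by (metis Suc_leD cong_trans)
qed

lemma pint_harm': "k < p \<Longrightarrow> pint p (harm k m)"
proof -
  assume k: "k < p"
  have "harm k m = (\<Sum>j=1..k. (1 / of_nat j)^m)" unfolding harm_def by (simp add: power_one_over)
  moreover have "pint p (\<Sum>j=1..k. (1 / of_nat j)^m)"
    by (rule pint_sum[OF pr], rule pint_power[OF pr], rule pint_inv_nat[OF pr]) (use k in auto)
  ultimately show ?thesis by simp
qed

lemma pint_S11: "k < p \<Longrightarrow> pint p (S11 k)"
  unfolding S11_def
  by (rule pint_sum[OF pr], rule pint_divide_nat[OF pr], rule pint_harm') auto

lemma Bt_cong: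
  assumes f: "\<And>k. 1 \<le> k \<Longrightarrow> k \<le> p - 1 \<Longrightarrow> pint p (f k)"
  shows "pz p (Bt (p - 1) f + (\<Sum>k=1..p-1. f k))"
proof -
  have "Bt (p - 1) f + (\<Sum>k=1..p-1. f k) = (\<Sum>j<p-1. ((-1)^j * of_nat (p - 1 choose Suc j) + 1) * f (Suc j))"
    unfolding Bt_def sum_1n by (simp add: sum.distrib algebra_simps)
  also have "pz p \<dots>"
  proof (rule pz_sum[OF pr])
    fix j assume j: "j \<in> {..<p-1}"
    have "[(-1)^Suc j * int (p - 1 choose Suc j) = 1] (mod int p)" using j by (intro binom_cong) auto
    then have "int p dvd 1 - (-1)^Suc j * int (p - 1 choose Suc j)" by (simp add: cong_iff_dvd_diff dvd_diff_commute)
    then have d: "int p dvd (-1)^j * int (p - 1 choose Suc j) + 1" by (simp add: add.commute)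
    have "pz p (of_int ((-1)^j * int (p - 1 choose Suc j) + 1) * f (Suc j))"
      by (rule pz_mult2[OF pr pz_of_int[OF pr d]], rule f) (use j in auto)
    then show "pz p (((-1)^j * of_nat (p - 1 choose Suc j) + 1) * f (Suc j))" by simp
  qed
  finally show ?thesis .
qed

lemma inv_pair: assumes "1 \<le> i" "i < p" "odd m"
  shows "pz p (1 / (of_nat i)^m + 1 / (of_nat (p - i))^m)"
proof -
  have ni: "\<not> int p dvd int i" using assms by (auto dest: zdvd_imp_le)
  have nd1: "\<not> int p dvd int i ^ m"
    using ni prime_dvd_power[OF prime_int_p[OF pr]] by blast
  have nd2: "\<not> int p dvd (int i - int p) ^ m"
  proof
    assume "int p dvd (int i - int p) ^ m"
    then have "int p dvd int i - int p" using prime_dvd_power[OF prime_int_p[OF pr]] by blast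
    then have "int p dvd int i" by (metis diff_add_cancel dvd_add dvd_refl)
    then show False using ni by simp
  qed
  have "[int i = int i - int p] (mod int p)" by (simp add: cong_iff_dvd_diff)
  then have "[int i ^ m = (int i - int p) ^ m] (mod int p)" by (rule cong_pow)
  from pz_inv_cong[OF pr nd1 nd2 this]
  have "pz p (1 / of_int (int i ^ m) - 1 / of_int ((int i - int p) ^ m))" .
  moreover have "(int i - int p) ^ m = - (int (p - i) ^ m)"
    using assms by (simp add: of_nat_diff power_minus_odd[symmetric])
  ultimately show ?thesis by simp
qed

lemma harm_split: assumes "1 \<le> k" "k \<le> n + 1"
  shows "harm n m = harm (k - 1) m + (\<Sum>j=k..n. 1 / (of_nat j)^m)"
proof -
  have "{1..n} = {1..k-1} \<union> {k..n}" "{1..k-1} \<inter> {k..n} = {}" using assms by auto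
  then show ?thesis unfolding harm_def by (simp add: sum.union_disjoint)
qed

lemma rev_sum: assumes "k \<le> p" shows "(\<Sum>j=k..p-1. g j) = (\<Sum>i=1..p-k. g (p - i))"
  by (rule sum.reindex_bij_witness[where i="\<lambda>i. p - i" and j="\<lambda>i. p - i"]) (use assms p_gt1 in auto)

lemma rev3: assumes "1 \<le> k" "k \<le> p - 1"
  shows "pz p (harm (p - k) 3 + (harm (p - 1) 3 - harm (k - 1) 3))"
proof -
  have "harm (p - 1) 3 - harm (k - 1) 3 = (\<Sum>j=k..p-1. 1 / (of_nat j)^3)"
    using harm_split[of k "p - 1" 3] assms by simp
  also have "\<dots> = (\<Sum>i=1..p-k. 1 / (of_nat (p - i))^3)" using assms by (intro rev_sum) auto
  finally have "harm (p - k) 3 + (harm (p - 1) 3 - harm (k - 1) 3)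
     = (\<Sum>i=1..p-k. 1 / (of_nat i)^3 + 1 / (of_nat (p - i))^3)"
    unfolding harm_def by (simp add: sum.distrib)
  also have "pz p \<dots>"
    by (rule pz_sum[OF pr], rule inv_pair) (use assms p_gt1 in auto)
  finally show ?thesis .
qed

end


context
  fixes p :: nat
  assumes pr: "prime p" and p7: "p \<ge> 7"
begin

lemma p2: "p \<noteq> 2" using p7 by simp

lemma hpz: "m \<in> {1,2,3,4} \<Longrightarrow> pz p (harm (p - 1) m)"
  using harm_pz[OF pr p7] by blast

lemma XX_pz: "pz p (XX (p - 1))"
proof -
  have "XX (p - 1) = (\<Sum>k=1..p-1. harm (p - k) 3 / of_nat (p - k))"
    unfolding XX_def using rev_sum[OF pr, where k=1 and g="\<lambda>k. harm k 3 / of_nat k"] p7 by simp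
  then have e1: "XX (p - 1) + (\<Sum>k=1..p-1. harm (k - 1) 3 / of_nat k)
      = (\<Sum>k=1..p-1. harm (p - k) 3 / of_nat (p - k) + harm (k - 1) 3 / of_nat k)"
    by (simp add: sum.distrib)
  have "pz p (\<Sum>k=1..p-1. harm (p - k) 3 / of_nat (p - k) + harm (k - 1) 3 / of_nat k)"
  proof (rule pz_sum[OF pr])
    fix k assume k: "k \<in> {1..p-1}"
    define a where "a = harm (p - k) 3"
    define a' where "a' = harm (k - 1) 3"
    define u where "u = 1 / (of_nat (p - k) :: rat)"
    define v where "v = 1 / (of_nat k :: rat)"
    have "pz p (a + (harm (p - 1) 3 - a'))" unfolding a_def a'_def
      using rev3[OF pr, of k] k by auto
    then have "pz p ((a + (harm (p - 1) 3 - a')) - harm (p - 1) 3)"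
      using hpz[of 3] pz_diff[OF pr] by blast
    then have aa: "pz p (a - a')" by simp
    have up: "pint p u" unfolding u_def using k p_gt1[OF pr] by (intro pint_inv_nat[OF pr]) auto
    have a'p: "pint p a'" unfolding a'_def using k by (intro pint_harm'[OF pr]) auto
    have uv: "pz p (u + v)" unfolding u_def v_def using inv_pair[OF pr, of k 1] k p_gt1[OF pr] by (auto simp: add.commute of_nat_diff)
    have "pz p ((a - a') * u + a' * (u + v))"
      by (intro pz_add[OF pr] pz_mult2[OF pr aa up] pz_mult[OF pr a'p uv])
    moreover have "(a - a') * u + a' * (u + v) = harm (p - k) 3 / of_nat (p - k) + harm (k - 1) 3 / of_nat k"
      unfolding a_def a'_def u_def v_def by (simp add: algebra_simps)
    ultimately show "pz p (harm (p - k) 3 / of_nat (p - k) + harm (k - 1) 3 / of_nat k)" by simp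
  qed
  moreover have "(\<Sum>k=1..p-1. harm (k - 1) 3 / of_nat k) = XX (p - 1) - harm (p - 1) 4"
  proof -
    have "(\<Sum>k=1..p-1. harm (k - 1) 3 / of_nat k) = (\<Sum>k=1..p-1. harm k 3 / of_nat k - 1 / (of_nat k)^4)"
    proof (rule sum.cong[OF refl])
      fix k assume "k \<in> {1..p-1}"
      then obtain k' where k': "k = Suc k'" by (cases k) auto
      show "harm (k - 1) 3 / of_nat k = harm k 3 / of_nat k - 1 / (of_nat k)^4"
      proof -
        define q where "q = (of_nat k :: rat)"
        have q0: "q \<noteq> 0" unfolding q_def k' by simp
        have "harm k 3 = harm (k - 1) 3 + 1 / q^3" unfolding k' q_def harm_Suc
          by (simp add: power_one_over)
        then have "harm k 3 / q = harm (k - 1) 3 / q + 1 / q^4"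
          using q0 by (simp add: add_divide_distrib power_Suc2 mult.commute power_numeral_reduce)
        then show ?thesis unfolding q_def by simp
      qed
    qed
    then show ?thesis unfolding XX_def harm_def[of "p - 1" 4] by (simp add: sum_subtractf)
  qed
  ultimately have "pz p (2 * XX (p - 1) - harm (p - 1) 4)"
  proof -
    assume a1: "pz p (\<Sum>k=1..p-1. harm (p - k) 3 / of_nat (p - k) + harm (k - 1) 3 / of_nat k)"
      and a2: "(\<Sum>k=1..p-1. harm (k - 1) 3 / of_nat k) = XX (p - 1) - harm (p - 1) 4"
    have "2 * XX (p - 1) - harm (p - 1) 4 = (\<Sum>k=1..p-1. harm (p - k) 3 / of_nat (p - k) + harm (k - 1) 3 / of_nat k)"
      using e1 a2 by linarith
    then show ?thesis using a1 by simp
  qed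
  then have "pz p ((2 * XX (p - 1) - harm (p - 1) 4) + harm (p - 1) 4)"
    using hpz[of 4] pz_add[OF pr] by blast
  then show ?thesis using pz_cancel2[OF pr _ p2] by simp
qed

lemma main_pz: "pz p (AA (p - 1) + 3 / 2 * BB (p - 1))"
proof -
  define n where "n = p - 1"
  have h1: "pz p (harm n 1)" and h2: "pz p (harm n 2)" and h3: "pz p (harm n 3)" and h4: "pz p (harm n 4)"
    unfolding n_def using hpz by auto
  have hp: "pint p (harm n m)" for m unfolding n_def using p_gt1[OF pr] by (intro pint_harm'[OF pr]) auto
  have X: "pz p (XX n)" unfolding n_def by (rule XX_pz)
  have "pz p (harm n 1 * harm n 3 + harm n 4 - XX n)"
    using h1 h3 h4 X hp by (intro pz_diff[OF pr] pz_add[OF pr] pz_mult2[OF pr])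
  moreover have "YY n = harm n 1 * harm n 3 + harm n 4 - XX n" using E_XY[of n] by linarith
  ultimately have Y: "pz p (YY n)" by simp
  have "pz p (harm n 2 * harm n 2 + harm n 4)"
    using h2 h4 hp by (intro pz_add[OF pr] pz_mult2[OF pr])
  then have "pz p (2 * ZZ n)" using E_Z[of n] by (simp add: power2_eq_square)
  then have Z: "pz p (ZZ n)" using pz_cancel2[OF pr _ p2] by blast
  have fp: "pint p (S11 k / (of_nat k)^2)" if "1 \<le> k" "k \<le> p - 1" for k
  proof -
    have "pint p ((S11 k / of_nat k) / of_nat k)"
      using that p_gt1[OF pr]
      by (intro pint_divide_nat[OF pr] pint_S11[OF pr]) auto
    then show ?thesis by (simp add: power2_eq_square)
  qed
  have "pz p (Bt n (\<lambda>i. S11 i / (of_nat i)^2) + (\<Sum>k=1..n. S11 k / (of_nat k)^2))"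
    unfolding n_def by (rule Bt_cong[OF pr fp])
  then have "pz p (XX n + WW n)" unfolding E_dual WW_def .
  then have W: "pz p (WW n)" using X pz_diff[OF pr, of "XX n + WW n" "XX n"] by simp
  have B: "pz p (BB n)" unfolding E_B using W Z by (intro pz_diff[OF pr] pz_mult[OF pr]) (simp_all add: pint_numeral[OF pr])
  have "pz p ((harm n 1)^2 * harm n 2 + 2 * YY n + ZZ n - harm n 4 - BB n)"
    using h2 hp Y Z h4 B
    by (intro pz_diff[OF pr] pz_add[OF pr] pz_mult[OF pr]) (auto intro: pint_power[OF pr] simp: pint_numeral[OF pr])
  moreover have "2 * AA n = (harm n 1)^2 * harm n 2 + 2 * YY n + ZZ n - harm n 4 - BB n"
    using E_AB[of n] by linarith
  ultimately have "pz p (2 * AA n)" by simp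
  then have A: "pz p (AA n)" using pz_cancel2[OF pr _ p2] by blast
  have nd2: "\<not> int p dvd 2"
  proof
    assume "int p dvd 2"
    then have "int p \<le> 2" by (rule zdvd_imp_le) simp
    then show False using p7 by simp
  qed
  have "pint p (of_int 3 / of_int 2)" by (rule pint_divide_int[OF pr pint_of_int[OF pr] nd2])
  then have "pint p (3 / 2)" by simp
  then have "pz p (AA n + 3 / 2 * BB n)" using A B by (intro pz_add[OF pr] pz_mult[OF pr])
  then show ?thesis unfolding n_def .
qed

end

theorem lemma2p6:
  fixes p :: nat
  assumes "prime p" and "p \<ge> 7"
  shows "rat_cong (\<Sum>k=1..p-1. harm k 1 * harm k 2 / of_nat k)
                  (- (3/2) * (\<Sum>k=1..p-1. (harm k 1)^2 / (of_nat k)^2)) (int p)"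
  unfolding pz_rat_cong using main_pz[OF assms] unfolding AA_def BB_def by simp


end
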